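(* Let $\nu,\eta$ be two probability distributions on $[0,\infty)$, assume $\nu$ is a class (ii) distribution with associated functions $f,\varphi,\Phi$, and let $\theta>1$. Then $D_{F_\Phi}(\eta|\nu)<\infty$ implies $D_{KL}(\eta|\nu)<\infty$. Moreover, $D_{F_\Phi}(\eta|\nu)<\infty$ whenever $D_\alpha(\eta|\nu)<\infty$ for some $\alpha>1$.
   Context: Densities are written $f=e^{-\varphi}$, $g=e^{-\gamma}$. For a strictly convex $F$ with $F(1)=0$, $D_F(\eta|\nu)=\int_0^\infty F(g/f)f\,dx$ if $\eta\ll\nu$ and $+\infty$ otherwise; $D_{KL}$ corresponds to $F(y)=y\log y$ and $D_\alpha$ ($\alpha>1$) to $F(y)=\frac{y^\alpha-1}{\alpha(\alpha-1)}$. Class (ii): $\lim_{x\to\infty}\varphi(x)/x=0$, $\lim_{x\to\infty}\varphi(x)/\log x=\infty$, and there exist $\bar x>0$ and $\Phi:\mathbb R_+\to\mathbb R$ positive, strictly concave, twice differentiable and increasing on $[\bar x,\infty)$ such that, with $\Phi^{-1}$ the inverse of $\Phi|_{[\bar x,\infty)}$, $0<\liminf_{x\to\infty}\Phi^{-1}(\varphi(x))/x\le\limsup_{x\to\infty}\Phi^{-1}(\varphi(x))/x<\infty$. With $\bar y=\exp(\Phi(\bar x))$: $F_\Phi(y)=y\log y$ for $y\le\bar y$ and $F_\Phi(y)=a\,y\,\Phi^{-1}(\log y)^\theta+b$ for $y>\bar y$, where $a=\frac{1+\log\bar y}{\Phi^{-1}(\log\bar y)^\theta+\theta\Phi^{-1}(\log\bar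 y)^{\theta-1}(\Phi^{-1})'(\log\bar y)}$, $b=\bar y\log\bar y-a\bar y\Phi^{-1}(\log\bar y)^\theta$. *)

theory Defs
  imports "HOL-Probability.Probability"
begin

definition dens_of :: "(real \<Rightarrow> real) \<Rightarrow> real \<Rightarrow> real" where
  "dens_of \<phi> x = exp (- \<phi> x)"

definition nu_of :: "(real \<Rightarrow> real) \<Rightarrow> real measure" where
  "nu_of \<phi> = density lborel (\<lambda>x. ennreal (indicator {0..} x * dens_of \<phi> x))"

text \<open>F-divergence D_F(eta|nu) with nu having Lebesgue density f on [0,infinity).
  g is the Lebesgue density of eta. The value is +infinity if eta is not absolutely
  continuous w.r.t. nu, or if the integrand is not integrable (for convex F with F(1)=0
  the negative part is always integrable, so non-integrability means the integral is +infinity).\<close>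
definition fdiv :: "(real \<Rightarrow> real) \<Rightarrow> real measure \<Rightarrow> (real \<Rightarrow> real) \<Rightarrow> ereal" where
  "fdiv F \<eta> f =
     (if absolutely_continuous (density lborel (\<lambda>x. ennreal (indicator {0..} x * f x))) \<eta>
      then (let g = (\<lambda>x. enn2real (RN_deriv lborel \<eta> x)) in
            if set_integrable lborel {0..} (\<lambda>x. F (g x / f x) * f x)
            then ereal (LINT x:{0..}|lborel. F (g x / f x) * f x)
            else \<infinity>)
      else \<infinity>)"

definition F_KL :: "real \<Rightarrow> real" where
  "F_KL y = y * ln y"

definition F_alpha :: "real \<Rightarrow> real \<Rightarrow> real" where
  "F_alpha \<alpha> y = (y powr \<alpha> - 1) / (\<alpha> * (\<alpha> - 1))"

definition strictly_concave_on :: "real set \<Rightarrow> (real \<Rightarrow> real) \<Rightarrow> bool" where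
  "strictly_concave_on S g \<longleftrightarrow>
     (\<forall>x\<in>S. \<forall>y\<in>S. \<forall>t. x \<noteq> y \<and> 0 < t \<and> t < 1 \<longrightarrow>
        g (t * x + (1 - t) * y) > t * g x + (1 - t) * g y)"

definition Phi_inv :: "(real \<Rightarrow> real) \<Rightarrow> real \<Rightarrow> real \<Rightarrow> real" where
  "Phi_inv \<Phi> xb = the_inv_into {xb..} \<Phi>"

definition class_ii :: "(real \<Rightarrow> real) \<Rightarrow> (real \<Rightarrow> real) \<Rightarrow> real \<Rightarrow> bool" where
  "class_ii \<phi> \<Phi> xb \<longleftrightarrow>
     ((\<lambda>x. \<phi> x / x) \<longlongrightarrow> 0) at_top \<and>
     filterlim (\<lambda>x. \<phi> x / ln x) at_top at_top \<and>
     xb > 0 \<and>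
     (\<forall>x\<ge>xb. \<Phi> x > 0) \<and>
     strictly_concave_on {xb..} \<Phi> \<and>
     (\<exists>\<Phi>' \<Phi>''. \<forall>x\<ge>xb. (\<Phi> has_real_derivative \<Phi>' x) (at x within {xb..}) \<and>
                         (\<Phi>' has_real_derivative \<Phi>'' x) (at x within {xb..})) \<and>
     strict_mono_on {xb..} \<Phi> \<and>
     (\<forall>\<^sub>F x in at_top. \<phi> x \<in> \<Phi> ` {xb..}) \<and>
     0 < Liminf at_top (\<lambda>x. ereal (Phi_inv \<Phi> xb (\<phi> x) / x)) \<and>
     Limsup at_top (\<lambda>x. ereal (Phi_inv \<Phi> xb (\<phi> x) / x)) < \<infinity>"

definition F_Phi :: "(real \<Rightarrow> real) \<Rightarrow> real \<Rightarrow> real \<Rightarrow> real \<Rightarrow> real" where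
  "F_Phi \<Phi> xb \<theta> y =
     (let yb = exp (\<Phi> xb);
          Pinv = Phi_inv \<Phi> xb;
          dPinv = (THE D. (Pinv has_real_derivative D) (at (ln yb) within \<Phi> ` {xb..}));
          a = (1 + ln yb) /
              (Pinv (ln yb) powr \<theta> + \<theta> * Pinv (ln yb) powr (\<theta> - 1) * dPinv);
          b = yb * ln yb - a * yb * Pinv (ln yb) powr \<theta>
      in if y \<le> yb then y * ln y else a * y * Pinv (ln y) powr \<theta> + b)"

end

theory Submission
  imports Defs
begin


lemma g_integrable:
  fixes f :: "real \<Rightarrow> real"
  assumes fm: "f \<in> borel_measurable borel"
    and ac: "absolutely_continuous (density lborel (\<lambda>x. ennreal (indicator {0..} x * f x))) \<eta>"
    and p: "prob_space \<eta>" and s: "sets \<eta> = sets borel"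
  shows "integrable lborel (\<lambda>x. enn2real (RN_deriv lborel \<eta> x))"
proof -
  have hm: "(\<lambda>x. ennreal (indicator {0..} x * f x)) \<in> borel_measurable lborel"
    using fm by simp
  have ac2: "absolutely_continuous lborel \<eta>"
    using ac absolutely_continuousI_density[OF hm]
    unfolding absolutely_continuous_def by blast
  have "(\<integral>\<^sup>+x. RN_deriv lborel \<eta> x * 1 \<partial>lborel) = integral\<^sup>N \<eta> (\<lambda>_. 1)"
    by (rule sigma_finite_measure.RN_deriv_nn_integral[OF sigma_finite_lborel ac2, symmetric]) (auto simp: s)
  also have "\<dots> = emeasure \<eta> (space \<eta>)" by simp
  also have "\<dots> = 1" using p prob_space.emeasure_space_1 by blast
  finally have e: "(\<integral>\<^sup>+x. RN_deriv lborel \<eta> x \<partial>lborel) = 1" by simp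
  have "(\<integral>\<^sup>+x. ennreal (enn2real (RN_deriv lborel \<eta> x)) \<partial>lborel) \<le> (\<integral>\<^sup>+x. RN_deriv lborel \<eta> x \<partial>lborel)"
    by (intro nn_integral_mono) (simp add: ennreal_enn2real_if)
  then have "(\<integral>\<^sup>+x. ennreal (enn2real (RN_deriv lborel \<eta> x)) \<partial>lborel) < \<top>"
    unfolding e by (metis ennreal_1 ennreal_less_top order.strict_trans1)
  then show ?thesis
    by (intro integrableI_nonneg) auto
qed



lemma fdiv_transfer:
  fixes F1 F2 f :: "real \<Rightarrow> real" and \<eta> :: "real measure" and c1 c2 c3 :: real
  assumes fin: "fdiv F1 \<eta> f < \<infinity>"
    and F2m: "F2 \<in> borel_measurable borel"
    and fm: "f \<in> borel_measurable borel" and fpos: "\<And>x. f x > 0"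
    and fint: "set_integrable lborel {0..} f"
    and gint: "absolutely_continuous (density lborel (\<lambda>x. ennreal (indicator {0..} x * f x))) \<eta> \<Longrightarrow>
               integrable lborel (\<lambda>x. enn2real (RN_deriv lborel \<eta> x))"
    and c: "c1 \<ge> 0" "c2 \<ge> 0" "c3 \<ge> 0"
    and bnd: "\<And>y. y \<ge> 0 \<Longrightarrow> \<bar>F2 y\<bar> \<le> c1 + c2 * y + c3 * \<bar>F1 y\<bar>"
  shows "fdiv F2 \<eta> f < \<infinity>"
proof -
  define g where "g = (\<lambda>x. enn2real (RN_deriv lborel \<eta> x))"
  have ac: "absolutely_continuous (density lborel (\<lambda>x. ennreal (indicator {0..} x * f x))) \<eta>"
    using fin unfolding fdiv_def by (auto split: if_splits)
  have i1: "set_integrable lborel {0..} (\<lambda>x. F1 (g x / f x) * f x)"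
    using fin ac unfolding fdiv_def g_def Let_def by (auto split: if_splits)
  have gi: "integrable lborel g" using gint ac g_def by simp
  have gm: "g \<in> borel_measurable borel" unfolding g_def by simp
  have g0: "\<And>x. g x \<ge> 0" unfolding g_def by simp
  have "set_integrable lborel {0..} (\<lambda>x. c1 * f x + c2 * g x + c3 * \<bar>F1 (g x / f x) * f x\<bar>)"
  proof -
    have a: "set_integrable lborel {0..} (\<lambda>x. c1 * f x)" using fint
      by (simp add: set_integrable_mult_right)
    have b: "set_integrable lborel {0..} (\<lambda>x. c2 * g x)" using gi
      by (intro set_integrable_mult_right) (use integrable_real_mult_indicator[of "{0..}" lborel g] in \<open>auto simp: set_integrable_def mult.commute\<close>)
    have d: "set_integrable lborel {0..} (\<lambda>x. c3 * \<bar>F1 (g x / f x) * f x\<bar>)"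
      using i1 by (intro set_integrable_mult_right set_integrable_abs) auto
    show ?thesis using set_integral_add(1)[OF set_integral_add(1)[OF a b] d] by simp
  qed
  moreover have "set_integrable lborel {0..} (\<lambda>x. F2 (g x / f x) * f x)"
    unfolding set_integrable_def
  proof (rule Bochner_Integration.integrable_bound[where f="\<lambda>x. indicator {0..} x *\<^sub>R (c1 * f x + c2 * g x + c3 * \<bar>F1 (g x / f x) * f x\<bar>)"])
    show "integrable lborel (\<lambda>x. indicator {0..} x *\<^sub>R (c1 * f x + c2 * g x + c3 * \<bar>F1 (g x / f x) * f x\<bar>))"
      using calculation unfolding set_integrable_def .
    show "(\<lambda>x. indicator {0..} x *\<^sub>R (F2 (g x / f x) * f x)) \<in> borel_measurable lborel"
      using F2m fm gm by simp
    show "AE x in lborel. norm (indicator {0..} x *\<^sub>R (F2 (g x / f x) * f x))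
        \<le> norm (indicator {0..} x *\<^sub>R (c1 * f x + c2 * g x + c3 * \<bar>F1 (g x / f x) * f x\<bar>))"
    proof (rule AE_I2)
      fix x
      have fx: "f x > 0" by (rule fpos)
      have y0: "g x / f x \<ge> 0" using g0 fx by simp
      have "\<bar>F2 (g x / f x) * f x\<bar> = \<bar>F2 (g x / f x)\<bar> * f x" using fx by (simp add: abs_mult)
      also have "\<dots> \<le> (c1 + c2 * (g x / f x) + c3 * \<bar>F1 (g x / f x)\<bar>) * f x"
        using bnd[OF y0] fx by (intro mult_right_mono) auto
      also have "\<dots> = c1 * f x + c2 * g x + c3 * \<bar>F1 (g x / f x) * f x\<bar>"
        using fx by (simp add: algebra_simps abs_mult)
      finally have "\<bar>F2 (g x / f x) * f x\<bar> \<le> c1 * f x + c2 * g x + c3 * \<bar>F1 (g x / f x) * f x\<bar>" .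
      moreover have "0 \<le> c1 * f x + c2 * g x + c3 * \<bar>F1 (g x / f x) * f x\<bar>"
        using c fx g0[of x] by simp
      ultimately show "norm (indicator {0..} x *\<^sub>R (F2 (g x / f x) * f x))
        \<le> norm (indicator {0..} x *\<^sub>R (c1 * f x + c2 * g x + c3 * \<bar>F1 (g x / f x) * f x\<bar>))"
        by (auto simp: indicator_def)
    qed
  qed
  then show ?thesis using ac unfolding fdiv_def g_def Let_def by simp
qed



locale phi_setup =
  fixes \<Phi> :: "real \<Rightarrow> real" and xb D0 :: real
  assumes xb: "xb > 0"
    and pos: "\<forall>x\<ge>xb. \<Phi> x > 0"
    and conc: "strictly_concave_on {xb..} \<Phi>"
    and smono: "strict_mono_on {xb..} \<Phi>"
    and cont: "continuous_on {xb..} \<Phi>"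
    and unb: "\<forall>t. \<exists>x\<ge>xb. \<Phi> x \<ge> t"
    and D0: "(\<Phi> has_real_derivative D0) (at xb within {xb..})"
begin

abbreviation "Pinv \<equiv> Phi_inv \<Phi> xb"
abbreviation "t0 \<equiv> \<Phi> xb"

lemma inj: "inj_on \<Phi> {xb..}" using smono strict_mono_on_imp_inj_on by blast

lemma le_iff: "x \<ge> xb \<Longrightarrow> y \<ge> xb \<Longrightarrow> \<Phi> x \<le> \<Phi> y \<longleftrightarrow> x \<le> y"
  using strict_mono_on_less_eq[OF smono] by simp

lemma less_iff: "x \<ge> xb \<Longrightarrow> y \<ge> xb \<Longrightarrow> \<Phi> x < \<Phi> y \<longleftrightarrow> x < y"
  using strict_mono_on_less[OF smono] by simp

lemma range: "\<Phi> ` {xb..} = {t0..}"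
proof
  show "\<Phi> ` {xb..} \<subseteq> {t0..}" using le_iff by auto
  show "{t0..} \<subseteq> \<Phi> ` {xb..}"
  proof
    fix t assume t: "t \<in> {t0..}"
    obtain b where b: "b \<ge> xb" "\<Phi> b \<ge> t" using unb by blast
    have "continuous_on {xb..b} \<Phi>" using cont by (rule continuous_on_subset) auto
    then obtain x where "xb \<le> x" "x \<le> b" "\<Phi> x = t" using IVT'[of \<Phi> xb t b] t b by auto
    then show "t \<in> \<Phi> ` {xb..}" by auto
  qed
qed

lemma Pinv_Phi: "x \<ge> xb \<Longrightarrow> Pinv (\<Phi> x) = x"
  unfolding Phi_inv_def using the_inv_into_f_f[OF inj] by simp

lemma Phi_Pinv: "t \<ge> t0 \<Longrightarrow> \<Phi> (Pinv t) = t"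
  unfolding Phi_inv_def using f_the_inv_into_f[OF inj] range by simp

lemma Pinv_ge: "t \<ge> t0 \<Longrightarrow> Pinv t \<ge> xb"
  unfolding Phi_inv_def using the_inv_into_into[OF inj, of t "{xb..}"] range by auto

lemma Pinv_le: "t \<ge> t0 \<Longrightarrow> y \<ge> xb \<Longrightarrow> t \<le> \<Phi> y \<Longrightarrow> Pinv t \<le> y"
  using le_iff[OF Pinv_ge, of t y] Phi_Pinv by auto

lemma Pinv_mono: "t0 \<le> s \<Longrightarrow> s \<le> t \<Longrightarrow> Pinv s \<le> Pinv t"
  using Pinv_le[of s "Pinv t"] Pinv_ge Phi_Pinv by auto

definition "B = \<Phi> (xb+1) - \<Phi> xb"

lemma B_pos: "B > 0" unfolding B_def using less_iff[of xb "xb+1"] by simp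

lemma upper_chord: assumes "P \<ge> xb + 1" shows "\<Phi> P \<le> \<Phi> xb + B * (P - xb)"
proof (cases "P = xb + 1")
  case True then show ?thesis by (simp add: B_def)
next
  case False
  define t where "t = 1 / (P - xb)"
  have t: "0 < t" "t < 1" using assms False by (auto simp: t_def field_simps)
  have tt: "t * (P - xb) = 1" using assms by (simp add: t_def)
  have e: "t * P + (1 - t) * xb = xb + 1" using tt by (simp add: algebra_simps)
  have "\<Phi> (t * P + (1 - t) * xb) > t * \<Phi> P + (1 - t) * \<Phi> xb"
    using conc t assms False unfolding strictly_concave_on_def by auto
  then have "\<Phi> (xb+1) > t * \<Phi> P + (1 - t) * \<Phi> xb" using e by simp
  then have "\<Phi> (xb+1) - \<Phi> xb > t * (\<Phi> P - \<Phi> xb)" by (simp add: algebra_simps)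
  then have "(\<Phi> (xb+1) - \<Phi> xb) * (P - xb) > \<Phi> P - \<Phi> xb" using assms by (simp add: t_def field_simps)
  then show ?thesis by (simp add: B_def algebra_simps)
qed

lemma upper_lin: assumes "P \<ge> xb" shows "\<Phi> P \<le> \<Phi> (xb+1) + B * P"
proof (cases "P \<ge> xb + 1")
  case True
  have "B * xb \<ge> 0" using B_pos xb by simp
  then show ?thesis using upper_chord[OF True] B_pos by (simp add: B_def algebra_simps)
next
  case False
  then have "\<Phi> P \<le> \<Phi> (xb+1)" using le_iff[of P "xb+1"] assms by simp
  moreover have "B * P \<ge> 0" using B_pos xb assms by simp
  ultimately show ?thesis by simp
qed

lemma lower_chord: assumes "xb < w" "w \<le> xb + 1" shows "\<Phi> w - \<Phi> xb \<ge> B * (w - xb)"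
proof (cases "w = xb + 1")
  case True then show ?thesis by (simp add: B_def)
next
  case False
  define t where "t = w - xb"
  have t: "0 < t" "t < 1" using assms False by (auto simp: t_def)
  have e: "t * (xb+1) + (1 - t) * xb = w" by (simp add: t_def algebra_simps)
  have "\<Phi> (t * (xb+1) + (1 - t) * xb) > t * \<Phi> (xb+1) + (1 - t) * \<Phi> xb"
    using conc t assms unfolding strictly_concave_on_def by auto
  then show ?thesis using e by (simp add: B_def t_def algebra_simps)
qed

lemma D0_ge: "D0 \<ge> B"
proof -
  have q: "((\<lambda>x. (\<Phi> x - \<Phi> xb) / (x - xb)) \<longlongrightarrow> D0) (at_right xb)"
    using D0 unfolding has_field_derivative_iff at_within_Ici_at_right .
  have "eventually (\<lambda>x. (\<Phi> x - \<Phi> xb) / (x - xb) \<ge> B) (at_right xb)"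
    unfolding eventually_at_right_field
  proof (intro exI[of _ "xb+1"] conjI allI impI)
    fix y assume "xb < y" "y < xb + 1"
    then show "(\<Phi> y - \<Phi> xb) / (y - xb) \<ge> B" using lower_chord[of y] by (simp add: field_simps)
  qed simp
  then show ?thesis using tendsto_lowerbound[OF q] by simp
qed

lemma D0_pos: "D0 > 0" using D0_ge B_pos by simp

lemma Pinv_t0: "Pinv t0 = xb" using Pinv_Phi by simp

lemma Pinv_tendsto: "(Pinv \<longlongrightarrow> xb) (at_right t0)"
proof (rule order_tendstoI)
  fix a assume "a < xb"
  show "eventually (\<lambda>t. a < Pinv t) (at_right t0)"
    unfolding eventually_at_right_field using Pinv_ge \<open>a < xb\<close>
    by (intro exI[of _ "t0+1"]) (auto intro: less_le_trans)
next
  fix b assume b: "xb < b"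
  have "\<Phi> b > t0" using less_iff[of xb b] b by simp
  show "eventually (\<lambda>t. Pinv t < b) (at_right t0)"
    unfolding eventually_at_right_field
  proof (intro exI[of _ "\<Phi> b"] conjI allI impI)
    fix y assume y: "t0 < y" "y < \<Phi> b"
    show "Pinv y < b"
    proof (rule ccontr)
      assume "\<not> Pinv y < b"
      then have "\<Phi> b \<le> \<Phi> (Pinv y)" using le_iff[of b "Pinv y"] b by simp
      then show False using Phi_Pinv[of y] y by simp
    qed
  qed fact
qed

lemma Pinv_deriv: "(Pinv has_real_derivative (1 / D0)) (at t0 within \<Phi> ` {xb..})"
proof -
  have q: "((\<lambda>x. (\<Phi> x - \<Phi> xb) / (x - xb)) \<longlongrightarrow> D0) (at_right xb)"
    using D0 unfolding has_field_derivative_iff at_within_Ici_at_right .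
  have fl: "filterlim Pinv (at_right xb) (at_right t0)"
    unfolding filterlim_at
  proof
    show "eventually (\<lambda>t. Pinv t \<in> {xb<..} \<and> Pinv t \<noteq> xb) (at_right t0)"
      unfolding eventually_at_right_field
    proof (intro exI[of _ "t0+1"] conjI allI impI)
      fix y assume y: "t0 < y" "y < t0 + 1"
      have "Pinv y \<ge> xb" using Pinv_ge y by simp
      moreover have "Pinv y \<noteq> xb" using Phi_Pinv[of y] y by auto
      ultimately show "Pinv y \<in> {xb<..}" "Pinv y \<noteq> xb" by auto
    qed simp
  qed (rule Pinv_tendsto)
  have c: "((\<lambda>t. (\<Phi> (Pinv t) - \<Phi> xb) / (Pinv t - xb)) \<longlongrightarrow> D0) (at_right t0)"
    using filterlim_compose[OF q fl] by simp
  have c2: "((\<lambda>t. inverse ((\<Phi> (Pinv t) - \<Phi> xb) / (Pinv t - xb))) \<longlongrightarrow> inverse D0) (at_right t0)"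
    using tendsto_inverse[OF c] D0_pos by simp
  have ev: "eventually (\<lambda>t. inverse ((\<Phi> (Pinv t) - \<Phi> xb) / (Pinv t - xb)) = (Pinv t - Pinv t0) / (t - t0)) (at_right t0)"
    unfolding eventually_at_right_field
  proof (intro exI[of _ "t0+1"] conjI allI impI)
    fix y assume y: "t0 < y" "y < t0 + 1"
    show "inverse ((\<Phi> (Pinv y) - \<Phi> xb) / (Pinv y - xb)) = (Pinv y - Pinv t0) / (y - t0)"
      using Phi_Pinv[of y] y Pinv_t0 by (simp add: divide_inverse)
  qed simp
  have "((\<lambda>t. (Pinv t - Pinv t0) / (t - t0)) \<longlongrightarrow> 1 / D0) (at_right t0)"
    using tendsto_cong[OF ev] c2 by (simp add: inverse_eq_divide)
  then show ?thesis unfolding has_field_derivative_iff range at_within_Ici_at_right .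
qed

lemma dPinv: "(THE D. (Pinv has_real_derivative D) (at t0 within \<Phi> ` {xb..})) = 1 / D0"
proof (rule the_equality)
  show "(Pinv has_real_derivative (1 / D0)) (at t0 within \<Phi> ` {xb..})" by (rule Pinv_deriv)
  fix D assume "(Pinv has_real_derivative D) (at t0 within \<Phi> ` {xb..})"
  then have "((\<lambda>t. (Pinv t - Pinv t0) / (t - t0)) \<longlongrightarrow> D) (at_right t0)"
    unfolding has_field_derivative_iff range at_within_Ici_at_right .
  moreover have "((\<lambda>t. (Pinv t - Pinv t0) / (t - t0)) \<longlongrightarrow> 1/D0) (at_right t0)"
    using Pinv_deriv unfolding has_field_derivative_iff range at_within_Ici_at_right .
  ultimately show "D = 1 / D0" using tendsto_unique by (metis trivial_limit_at_right_real)
qed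


definition "aa \<theta> = (1 + t0) / (xb powr \<theta> + \<theta> * xb powr (\<theta> - 1) * (1 / D0))"
definition "bb \<theta> = exp t0 * t0 - aa \<theta> * exp t0 * xb powr \<theta>"

lemma aa_pos: "aa \<theta> > 0" if "\<theta> > 1"
proof -
  have "t0 > 0" using pos by simp
  moreover have "xb powr \<theta> + \<theta> * xb powr (\<theta> - 1) * (1 / D0) > 0"
    using xb D0_pos that by (intro add_pos_nonneg) auto
  ultimately show ?thesis unfolding aa_def by simp
qed

lemma F_eq: "F_Phi \<Phi> xb \<theta> y = (if y \<le> exp t0 then y * ln y else aa \<theta> * y * Pinv (ln y) powr \<theta> + bb \<theta>)"
  unfolding F_Phi_def Let_def aa_def bb_def using dPinv Pinv_t0 by simp

lemma ylny: "(y::real) \<ge> 0 \<Longrightarrow> \<bar>y * ln y\<bar> \<le> 1 + y * y"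
proof (cases "y \<le> 1")
  case True
  assume y: "y \<ge> 0"
  show ?thesis
  proof (cases "y = 0")
    case False
    then have yp: "y > 0" using y by linarith
    have "ln (1/y) \<le> 1/y - 1" using yp by (intro ln_le_minus_one) auto
    then have "- ln y \<le> 1/y - 1" using yp by (simp add: ln_div)
    then have "y * (- ln y) \<le> y * (1/y - 1)" using yp by (intro mult_left_mono) auto
    then have "- (y * ln y) \<le> 1 - y" using yp by (simp add: algebra_simps)
    moreover have n: "y * ln y \<le> 0" using True yp by (intro mult_nonneg_nonpos) auto
    moreover have "\<bar>y * ln y\<bar> = - (y * ln y)" using n by simp
    moreover have "y * y \<ge> 0" by simp
    ultimately show ?thesis using yp by linarith
  qed simp
next
  case False
  then have y: "y > 1" by simp
  have "ln y \<le> y - 1" using y by (intro ln_le_minus_one) auto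
  then have "y * ln y \<le> y * y" using y by (intro mult_left_mono) auto
  moreover have "ln y \<ge> 0" using y by simp
  then have "\<bar>y * ln y\<bar> = y * ln y" using y by simp
  ultimately show ?thesis by linarith
qed

lemma bound1:
  assumes th: "\<theta> > 1"
  shows "\<exists>c1 c2 c3. c1 \<ge> 0 \<and> c2 \<ge> 0 \<and> c3 \<ge> 0 \<and>
     (\<forall>y\<ge>0. \<bar>F_KL y\<bar> \<le> c1 + c2 * y + c3 * \<bar>F_Phi \<Phi> xb \<theta> y\<bar>)"
proof -
  define a where "a = aa \<theta>"
  define b where "b = bb \<theta>"
  have a: "a > 0" using aa_pos th a_def by simp
  define c1 where "c1 = B * \<bar>b\<bar> / a"
  define c2 where "c2 = \<bar>\<Phi> (xb+1) + B\<bar>"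
  define c3 where "c3 = 1 + B / a"
  have B: "B > 0" by (rule B_pos)
  have c: "c1 \<ge> 0" "c2 \<ge> 0" "c3 \<ge> 1" using a B by (auto simp: c1_def c2_def c3_def)
  have "\<bar>F_KL y\<bar> \<le> c1 + c2 * y + c3 * \<bar>F_Phi \<Phi> xb \<theta> y\<bar>" if y: "y \<ge> 0" for y
  proof (cases "y \<le> exp t0")
    case True
    then have "F_KL y = F_Phi \<Phi> xb \<theta> y" by (simp add: F_eq F_KL_def)
    moreover have "\<bar>F_Phi \<Phi> xb \<theta> y\<bar> \<le> c3 * \<bar>F_Phi \<Phi> xb \<theta> y\<bar>"
      using c(3) by (simp add: mult_le_cancel_right1)
    ultimately show ?thesis using c y by (smt (verit) mult_nonneg_nonneg)
  next
    case False
    then have yp0: "y > 0" using exp_gt_zero[of t0] by linarith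
    then have yp: "y > 0" "ln y > t0" using False ln_less_cancel_iff[of "exp t0" y] by auto
    define P where "P = Pinv (ln y)"
    have P: "P \<ge> xb" "\<Phi> P = ln y" using Pinv_ge Phi_Pinv yp unfolding P_def by auto
    have F: "F_Phi \<Phi> xb \<theta> y = a * y * P powr \<theta> + b"
      using False by (simp add: F_eq a_def b_def P_def)
    have Pp: "P powr \<theta> \<ge> P - 1"
    proof (cases "P \<ge> 1")
      case True
      then have "P powr 1 \<le> P powr \<theta>" using th by (intro powr_mono) auto
      then show ?thesis using True by simp
    next
      case False
      have "P powr \<theta> \<ge> 0" by simp
      then show ?thesis using False by linarith
    qed
    have "ln y \<le> \<Phi> (xb+1) + B * P" using upper_lin[OF P(1)] P(2) by simp
    also have "\<dots> \<le> (\<Phi> (xb+1) + B) + B * P powr \<theta>"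
    proof -
      have "B * (P - 1) \<le> B * P powr \<theta>" using Pp B by (intro mult_left_mono) auto
      then show ?thesis by (simp add: algebra_simps)
    qed
    finally have l: "ln y \<le> (\<Phi> (xb+1) + B) + B * P powr \<theta>" .
    have "y * ln y \<le> y * ((\<Phi> (xb+1) + B) + B * P powr \<theta>)" using l yp by (intro mult_left_mono) auto
    also have "\<dots> = (\<Phi> (xb+1) + B) * y + (B / a) * (a * y * P powr \<theta>)" using a by (simp add: algebra_simps)
    also have "\<dots> = (\<Phi> (xb+1) + B) * y + (B / a) * (F_Phi \<Phi> xb \<theta> y - b)" using F by simp
    also have "\<dots> \<le> c2 * y + (B / a) * (\<bar>F_Phi \<Phi> xb \<theta> y\<bar> + \<bar>b\<bar>)"
    proof -
      have "(\<Phi> (xb+1) + B) * y \<le> c2 * y" using yp unfolding c2_def by (intro mult_right_mono) auto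
      moreover have "(B / a) * (F_Phi \<Phi> xb \<theta> y - b) \<le> (B / a) * (\<bar>F_Phi \<Phi> xb \<theta> y\<bar> + \<bar>b\<bar>)"
        using a B by (intro mult_left_mono) auto
      ultimately show ?thesis by simp
    qed
    also have "\<dots> \<le> c1 + c2 * y + c3 * \<bar>F_Phi \<Phi> xb \<theta> y\<bar>"
      unfolding c1_def c3_def by (simp add: algebra_simps)
    finally have "y * ln y \<le> c1 + c2 * y + c3 * \<bar>F_Phi \<Phi> xb \<theta> y\<bar>" .
    moreover have "y * ln y \<ge> 0"
    proof -
      have "t0 > 0" using pos by simp
      then have "ln y \<ge> 0" using yp by linarith
      then show ?thesis using yp by simp
    qed
    ultimately show ?thesis by (simp add: F_KL_def)
  qed
  then show ?thesis using c by (intro exI[of _ c1] exI[of _ c2] exI[of _ c3]) auto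
qed

lemma F_meas: "F_Phi \<Phi> xb \<theta> \<in> borel_measurable borel"
proof -
  define h where "h = (\<lambda>y. Pinv (ln (max y (exp t0))))"
  have "mono h" unfolding h_def
  proof (rule monoI)
    fix s t :: real assume "s \<le> t"
    moreover have "ln (max s (exp t0)) \<ge> t0" "ln (max t (exp t0)) \<ge> t0"
    proof -
      have p: "0 < max s (exp t0)" "0 < max t (exp t0)" "exp t0 \<le> max s (exp t0)" "exp t0 \<le> max t (exp t0)"
        using exp_gt_zero[of t0] by linarith+
      have "ln (exp t0) \<le> ln (max s (exp t0))" using p(3) ln_le_cancel_iff[OF exp_gt_zero p(1)] by blast
      then show "ln (max s (exp t0)) \<ge> t0" by simp
      have "ln (exp t0) \<le> ln (max t (exp t0))" using p(4) ln_le_cancel_iff[OF exp_gt_zero p(2)] by blast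
      then show "ln (max t (exp t0)) \<ge> t0" by simp
    qed
    moreover have "ln (max s (exp t0)) \<le> ln (max t (exp t0))"
    proof -
      have p: "0 < max s (exp t0)" "max s (exp t0) \<le> max t (exp t0)"
        using exp_gt_zero[of t0] \<open>s \<le> t\<close> by (linarith, simp add: max.coboundedI1)
      then show ?thesis using ln_le_cancel_iff[OF p(1), of "max t (exp t0)"] by linarith
    qed
    ultimately show "Pinv (ln (max s (exp t0))) \<le> Pinv (ln (max t (exp t0)))"
      by (intro Pinv_mono) auto
  qed
  then have hm: "h \<in> borel_measurable borel" by (rule borel_measurable_mono)
  have eq: "F_Phi \<Phi> xb \<theta> = (\<lambda>y. if y \<le> exp t0 then y * ln y else aa \<theta> * y * h y powr \<theta> + bb \<theta>)"
    by (rule ext) (simp add: F_eq h_def)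
  show ?thesis unfolding eq using hm by measurable
qed


lemma Pinv_growth:
  assumes M: "M > 0"
    and H: "\<exists>K>0. \<exists>X. \<forall>x\<ge>X. x > 0 \<and> K * x \<ge> xb \<and> \<Phi> (K * x) \<ge> M * ln x"
  shows "\<exists>K>0. \<exists>T\<ge>t0. \<forall>t\<ge>T. Pinv t \<le> K * exp (t / M)"
proof -
  obtain K X where K: "K > 0" and KX: "\<forall>x\<ge>X. x > 0 \<and> K * x \<ge> xb \<and> \<Phi> (K * x) \<ge> M * ln x"
    using H by blast
  define T where "T = max t0 (M * ln (max X 1))"
  have "Pinv t \<le> K * exp (t / M)" if t: "t \<ge> T" for t
  proof -
    define x where "x = exp (t / M)"
    have "t / M \<ge> ln (max X 1)" using t M unfolding T_def by (simp add: field_simps)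
    then have "exp (t / M) \<ge> exp (ln (max X 1))" by (rule exp_mono)
    moreover have "exp (ln (max X 1)) = max X 1" by simp
    ultimately have xX: "x \<ge> X" unfolding x_def by linarith
    have lx: "M * ln x = t" using M unfolding x_def by simp
    have "t \<ge> t0" using t unfolding T_def by simp
    then show ?thesis using Pinv_le[of t "K * x"] KX xX lx unfolding x_def by auto
  qed
  moreover have "T \<ge> t0" unfolding T_def by simp
  ultimately show ?thesis using K by blast
qed

lemma bound2:
  assumes th: "\<theta> > 1" and al: "\<alpha> > 1"
    and H: "\<And>M. M > 0 \<Longrightarrow> \<exists>K>0. \<exists>X. \<forall>x\<ge>X. x > 0 \<and> K * x \<ge> xb \<and> \<Phi> (K * x) \<ge> M * ln x"
  shows "\<exists>c1 c2 c3. c1 \<ge> 0 \<and> c2 \<ge> 0 \<and> c3 \<ge> 0 \<and>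
     (\<forall>y\<ge>0. \<bar>F_Phi \<Phi> xb \<theta> y\<bar> \<le> c1 + c2 * y + c3 * \<bar>F_alpha \<alpha> y\<bar>)"
proof -
  define M where "M = \<theta> / (\<alpha> - 1)"
  have M: "M > 0" using th al unfolding M_def by simp
  obtain K T where K: "K > 0" and T: "T \<ge> t0" and KT: "\<forall>t\<ge>T. Pinv t \<le> K * exp (t / M)"
    using Pinv_growth[OF M H[OF M]] by blast
  define a where "a = aa \<theta>"
  define b where "b = bb \<theta>"
  have a: "a > 0" using aa_pos th a_def by simp
  define C where "C = \<bar>b\<bar> + 1 + exp t0 * exp t0 + a * exp T * Pinv T powr \<theta>"
  define D where "D = a * K powr \<theta>"
  have D: "D \<ge> 0" using a unfolding D_def by simp
  have C: "C \<ge> 0" using a unfolding C_def by (intro add_nonneg_nonneg) auto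
  have main: "\<bar>F_Phi \<Phi> xb \<theta> y\<bar> \<le> C + D * y powr \<alpha>" if y: "y \<ge> 0" for y
  proof (cases "y \<le> exp t0")
    case True
    then have "\<bar>F_Phi \<Phi> xb \<theta> y\<bar> = \<bar>y * ln y\<bar>" by (simp add: F_eq)
    also have "\<dots> \<le> 1 + y * y" using ylny y by simp
    also have "\<dots> \<le> 1 + exp t0 * exp t0" using True y by (simp add: mult_mono)
    also have "\<dots> \<le> C + D * y powr \<alpha>"
    proof -
      have "a * exp T * Pinv T powr \<theta> \<ge> 0" "D * y powr \<alpha> \<ge> 0" using a D by auto
      then show ?thesis unfolding C_def by linarith
    qed
    finally show ?thesis .
  next
    case False
    then have yp0: "y > 0" using exp_gt_zero[of t0] by linarith
    then have yp: "y > 0" "ln y > t0" using False ln_less_cancel_iff[of "exp t0" y] by auto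
    define P where "P = Pinv (ln y)"
    have P: "P \<ge> xb" using Pinv_ge yp unfolding P_def by auto
    have F: "F_Phi \<Phi> xb \<theta> y = a * y * P powr \<theta> + b"
      using False by (simp add: F_eq a_def b_def P_def)
    have Fl: "F_Phi \<Phi> xb \<theta> y \<ge> b" using F a yp by simp
    show ?thesis
    proof (cases "ln y \<ge> T")
      case True
      have "P \<le> K * exp (ln y / M)" using KT True unfolding P_def by simp
      also have "exp (ln y / M) = y powr (1 / M)" using yp by (simp add: powr_def)
      finally have P1: "P \<le> K * y powr (1 / M)" .
      have "P powr \<theta> \<le> (K * y powr (1 / M)) powr \<theta>"
        using P1 P xb th by (intro powr_mono2) auto
      also have "\<dots> = K powr \<theta> * y powr (\<alpha> - 1)"
        using K yp M al th by (simp add: powr_mult powr_powr M_def)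
      finally have P2: "P powr \<theta> \<le> K powr \<theta> * y powr (\<alpha> - 1)" .
      have "a * y * P powr \<theta> \<le> a * y * (K powr \<theta> * y powr (\<alpha> - 1))"
        using P2 a yp by (intro mult_left_mono) auto
      also have "\<dots> = D * y powr \<alpha>"
        using yp by (simp add: D_def powr_diff field_simps)
      finally have "F_Phi \<Phi> xb \<theta> y \<le> D * y powr \<alpha> + b" using F by simp
      then show ?thesis using Fl unfolding C_def by (smt (verit) mult_nonneg_nonneg a exp_gt_zero powr_ge_zero)
    next
      case False
      have "P \<le> Pinv T" unfolding P_def using False yp by (intro Pinv_mono) auto
      then have "P powr \<theta> \<le> Pinv T powr \<theta>" using P xb th by (intro powr_mono2) auto
      moreover have "y \<le> exp T" using False yp by (metis exp_ln less_imp_le not_le exp_le_cancel_iff)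
      ultimately have "y * P powr \<theta> \<le> exp T * Pinv T powr \<theta>" using yp by (intro mult_mono) auto
      then have "a * (y * P powr \<theta>) \<le> a * (exp T * Pinv T powr \<theta>)" using a by (intro mult_left_mono) auto
      then have "F_Phi \<Phi> xb \<theta> y \<le> a * exp T * Pinv T powr \<theta> + b" using F by (simp add: mult.assoc)
      moreover have "D * y powr \<alpha> \<ge> 0" using D by simp
      ultimately show ?thesis using Fl unfolding C_def by (smt (verit) exp_gt_zero mult_nonneg_nonneg)
    qed
  qed
  have "\<bar>F_Phi \<Phi> xb \<theta> y\<bar> \<le> (C + D) + 0 * y + (D * (\<alpha> * (\<alpha> - 1))) * \<bar>F_alpha \<alpha> y\<bar>" if y: "y \<ge> 0" for y
  proof -
    have e: "y powr \<alpha> = \<alpha> * (\<alpha> - 1) * F_alpha \<alpha> y + 1" using al unfolding F_alpha_def by (simp add: field_simps)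
    have "y powr \<alpha> \<le> \<alpha> * (\<alpha> - 1) * \<bar>F_alpha \<alpha> y\<bar> + 1"
      unfolding e using al by (intro add_right_mono mult_left_mono) auto
    then have "D * y powr \<alpha> \<le> D * (\<alpha> * (\<alpha> - 1) * \<bar>F_alpha \<alpha> y\<bar> + 1)" using D by (intro mult_left_mono) auto
    then show ?thesis using main[OF y] by (simp add: algebra_simps)
  qed
  moreover have "D * (\<alpha> * (\<alpha> - 1)) \<ge> 0" using D al by simp
  ultimately show ?thesis using C D by (intro exI[of _ "C + D"] exI[of _ 0] exI[of _ "D * (\<alpha> * (\<alpha> - 1))"]) auto
qed

end

theorem proposition4p3:
  fixes \<phi> \<Phi> :: "real \<Rightarrow> real" and xb \<theta> :: real and \<eta> :: "real measure"
  assumes "\<phi> \<in> borel_measurable borel"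
    and "prob_space (nu_of \<phi>)"
    and "prob_space \<eta>" and "sets \<eta> = sets borel" and "emeasure \<eta> {..<0} = 0"
    and "class_ii \<phi> \<Phi> xb"
    and "\<theta> > 1"
  shows "(fdiv (F_Phi \<Phi> xb \<theta>) \<eta> (dens_of \<phi>) < \<infinity> \<longrightarrow> fdiv F_KL \<eta> (dens_of \<phi>) < \<infinity>) \<and>
         ((\<exists>\<alpha>>1. fdiv (F_alpha \<alpha>) \<eta> (dens_of \<phi>) < \<infinity>) \<longrightarrow>
            fdiv (F_Phi \<Phi> xb \<theta>) \<eta> (dens_of \<phi>) < \<infinity>)"
proof -
  note phim = assms(1)
  note th = assms(7)
  have ci: "((\<lambda>x. \<phi> x / ln x) \<longlongrightarrow> 0) at_top \<or> True" by simp
  from assms(6) have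
    lnlim: "filterlim (\<lambda>x. \<phi> x / ln x) at_top at_top" and
    xb: "xb > 0" and pos: "\<forall>x\<ge>xb. \<Phi> x > 0" and conc: "strictly_concave_on {xb..} \<Phi>" and
    der: "\<exists>\<Phi>' \<Phi>''. \<forall>x\<ge>xb. (\<Phi> has_real_derivative \<Phi>' x) (at x within {xb..}) \<and>
                         (\<Phi>' has_real_derivative \<Phi>'' x) (at x within {xb..})" and
    smono: "strict_mono_on {xb..} \<Phi>" and
    evr: "\<forall>\<^sub>F x in at_top. \<phi> x \<in> \<Phi> ` {xb..}" and
    ls: "Limsup at_top (\<lambda>x. ereal (Phi_inv \<Phi> xb (\<phi> x) / x)) < \<infinity>"
    unfolding class_ii_def by auto
  obtain \<Phi>' where d: "\<And>x. x \<ge> xb \<Longrightarrow> (\<Phi> has_real_derivative \<Phi>' x) (at x within {xb..})"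
    using der by blast
  have cont: "continuous_on {xb..} \<Phi>"
    unfolding continuous_on_eq_continuous_within by (auto intro: DERIV_continuous[OF d])
  have phiM: "\<forall>\<^sub>F x in at_top. \<phi> x \<ge> M * ln x \<and> x > 1" if "M > 0" for M
  proof -
    have "\<forall>\<^sub>F x in at_top. \<phi> x / ln x \<ge> M" using lnlim unfolding filterlim_at_top by blast
    moreover have "\<forall>\<^sub>F x in at_top. x > (1::real)" by (rule eventually_gt_at_top)
    ultimately show ?thesis
    proof eventually_elim
      case (elim x)
      then have "ln x > 0" by simp
      then show ?case using elim by (simp add: field_simps)
    qed
  qed
  have unb: "\<forall>t. \<exists>x\<ge>xb. \<Phi> x \<ge> t"
  proof
    fix t :: real
    have "\<forall>\<^sub>F x in at_top. \<phi> x \<ge> 1 * ln x \<and> x > 1" by (rule phiM) simp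
    moreover have "\<forall>\<^sub>F x in at_top. x \<ge> exp (max t 0)" using eventually_ge_at_top by blast
    moreover note evr
    ultimately have "\<forall>\<^sub>F x in at_top. \<phi> x \<ge> t \<and> \<phi> x \<in> \<Phi> ` {xb..}"
    proof eventually_elim
      case (elim x)
      have "ln x \<ge> ln (exp (max t 0))" using elim by (subst ln_le_cancel_iff) auto
      then have "ln x \<ge> t" by simp
      then show ?case using elim by simp
    qed
    then obtain x where "\<phi> x \<ge> t" "\<phi> x \<in> \<Phi> ` {xb..}" using eventually_happens by force
    then show "\<exists>x\<ge>xb. \<Phi> x \<ge> t" by auto
  qed
  interpret P: phi_setup \<Phi> xb "\<Phi>' xb"
    by unfold_locales (use xb pos conc smono cont unb d[of xb] in auto)
  have H: "\<exists>K>0. \<exists>X. \<forall>x\<ge>X. x > 0 \<and> K * x \<ge> xb \<and> \<Phi> (K * x) \<ge> M * ln x" if M: "M > 0" for M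
  proof -
    obtain K0 :: real where K0: "Limsup at_top (\<lambda>x. ereal (Phi_inv \<Phi> xb (\<phi> x) / x)) < ereal K0"
      using ls by (cases "Limsup at_top (\<lambda>x. ereal (Phi_inv \<Phi> xb (\<phi> x) / x))") (auto, meson gt_ex)
    define K where "K = max K0 1"
    have "\<forall>\<^sub>F x in at_top. ereal (Phi_inv \<Phi> xb (\<phi> x) / x) < ereal K0" using Limsup_lessD[OF K0] .
    moreover note phiM[OF M] evr
    ultimately have "\<forall>\<^sub>F x in at_top. x > 0 \<and> K * x \<ge> xb \<and> \<Phi> (K * x) \<ge> M * ln x"
    proof eventually_elim
      case (elim x)
      then have x: "x > 0" by simp
      have r: "\<phi> x \<ge> \<Phi> xb" using elim P.range by auto
      have "Phi_inv \<Phi> xb (\<phi> x) / x < K" using elim unfolding K_def by simp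
      then have lt: "Phi_inv \<Phi> xb (\<phi> x) < K * x" using x by (simp add: field_simps)
      have ge: "Phi_inv \<Phi> xb (\<phi> x) \<ge> xb" using P.Pinv_ge r by simp
      have Kx: "K * x \<ge> xb" using lt ge by simp
      have "\<phi> x = \<Phi> (Phi_inv \<Phi> xb (\<phi> x))" using P.Phi_Pinv r by simp
      also have "\<dots> \<le> \<Phi> (K * x)" using P.le_iff[OF ge Kx] lt by simp
      finally show ?case using x Kx elim by simp
    qed
    then obtain X where "\<forall>x\<ge>X. x > 0 \<and> K * x \<ge> xb \<and> \<Phi> (K * x) \<ge> M * ln x"
      unfolding eventually_at_top_linorder by blast
    moreover have "K > 0" unfolding K_def by simp
    ultimately show ?thesis by blast
  qed
  define f where "f = dens_of \<phi>"
  have fm: "f \<in> borel_measurable borel" unfolding f_def dens_of_def using phim by measurable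
  have fpos: "\<And>x. f x > 0" unfolding f_def dens_of_def by simp
  have fint: "set_integrable lborel {0..} f"
  proof -
    have "emeasure (nu_of \<phi>) UNIV = 1"
      using prob_space.emeasure_space_1[OF assms(2)] by (simp add: nu_of_def)
    moreover have "emeasure (nu_of \<phi>) UNIV = (\<integral>\<^sup>+x. ennreal (indicator {0..} x * f x) \<partial>lborel)"
      unfolding nu_of_def f_def using fm unfolding f_def
      by (subst emeasure_density) (auto simp: f_def)
    ultimately have e: "(\<integral>\<^sup>+x. ennreal (indicator {0..} x * f x) \<partial>lborel) = 1" by simp
    show ?thesis unfolding set_integrable_def
      using fpos fm by (intro integrableI_nonneg) (auto simp: e less_imp_le)
  qed
  have gint: "absolutely_continuous (density lborel (\<lambda>x. ennreal (indicator {0..} x * f x))) \<eta> \<Longrightarrow>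
               integrable lborel (\<lambda>x. enn2real (RN_deriv lborel \<eta> x))"
    using g_integrable[OF fm _ assms(3) assms(4)] by blast
  have KLm: "F_KL \<in> borel_measurable borel" unfolding F_KL_def by measurable
  show ?thesis
  proof (intro conjI impI)
    assume fin: "fdiv (F_Phi \<Phi> xb \<theta>) \<eta> (dens_of \<phi>) < \<infinity>"
    obtain c1 c2 c3 where c: "c1 \<ge> 0" "c2 \<ge> 0" "c3 \<ge> 0"
      and b: "\<forall>y\<ge>0. \<bar>F_KL y\<bar> \<le> c1 + c2 * y + c3 * \<bar>F_Phi \<Phi> xb \<theta> y\<bar>"
      using P.bound1[OF th] by blast
    show "fdiv F_KL \<eta> (dens_of \<phi>) < \<infinity>"
      using fdiv_transfer[OF fin[folded f_def] KLm fm fpos fint gint c] b unfolding f_def by blast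
  next
    assume "\<exists>\<alpha>>1. fdiv (F_alpha \<alpha>) \<eta> (dens_of \<phi>) < \<infinity>"
    then obtain \<alpha> where al: "\<alpha> > 1" and fin: "fdiv (F_alpha \<alpha>) \<eta> (dens_of \<phi>) < \<infinity>" by blast
    obtain c1 c2 c3 where c: "c1 \<ge> 0" "c2 \<ge> 0" "c3 \<ge> 0"
      and b: "\<forall>y\<ge>0. \<bar>F_Phi \<Phi> xb \<theta> y\<bar> \<le> c1 + c2 * y + c3 * \<bar>F_alpha \<alpha> y\<bar>"
      using P.bound2[OF th al H] by blast
    show "fdiv (F_Phi \<Phi> xb \<theta>) \<eta> (dens_of \<phi>) < \<infinity>"
      using fdiv_transfer[OF fin[folded f_def] P.F_meas fm fpos fint gint c] b unfolding f_def by blast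
  qed
qed

end
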